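(* Let $\Delta$ be a CNF whose primal treewidth is $w$, and let $\Sigma$ be a CNF obtained by applying the BVA transformation $k$ times successively starting from $\Delta$. Then the primal treewidth of $\Sigma$ is at most $w+k$.
   Context: BVA transformation: given a CNF $\Delta$ and a fresh variable $Y$ not occurring in $\Delta$, choose a set $C_Y = \{Y \vee \alpha_1,\ldots, Y\vee \alpha_m\}$ of clauses containing literal $Y$ and a set $C_{\neg Y} = \{\neg Y \vee \beta_1,\ldots,\neg Y\vee\beta_k\}$ of clauses containing $\neg Y$ (with $\alpha_i,\beta_j$ clauses over variables of $\Delta$) such that the set of resolvents $C_Y \bowtie C_{\neg Y} = \{\alpha_i \vee \beta_j\}$ is contained in the clauses of $\Delta$ and $|C_Y \bowtie C_{\neg Y}| > |C_Y| + |C_{\neg Y}|$; the result is $\Delta$ with the clauses $C_Y \bowtie C_{\neg Y}$ removed and the clauses $C_Y \cup C_{\neg Y}$ added. Primal treewidth: a jointree for a CNF $\Delta$ is a tree whose vertices are labeled with subsets (clusters) of the variables of $\Delta$ such that (i) for each clause of $\Delta$ some cluster contains all its variables, and (ii) if a variable appears in the clusters of two vertices then it appears in every cluster on the path between them. The width of a jointree is its largest cluster size minus 1; the primal treewidth of $\Delta$ is the minimum width of a jointree for $\Delta$ (equivalently, the treewidth of the primal graph, whose vertices are the variables with an edge between two variables iff they occur together in some clause). *)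

theory Defs
  imports Main
begin

text \<open>Literals are pairs (variable, polarity); True = positive literal.
  A clause is a finite set of literals, a CNF is a finite set of clauses.\<close>

type_synonym 'v lit = "'v \<times> bool"
type_synonym 'v clause = "'v lit set"
type_synonym 'v cnf = "'v clause set"

definition cnf :: "'v cnf \<Rightarrow> bool" where
  "cnf \<Delta> \<longleftrightarrow> finite \<Delta> \<and> (\<forall>C\<in>\<Delta>. finite C)"

definition clause_vars :: "'v clause \<Rightarrow> 'v set" where
  "clause_vars C = fst ` C"

definition vars :: "'v cnf \<Rightarrow> 'v set" where
  "vars \<Delta> = (\<Union>C\<in>\<Delta>. clause_vars C)"

text \<open>Resolvent set of C_Y and C_{not Y}, given by their residual parts A = {alpha_i}, B = {beta_j}.\<close>
definition resolvents :: "'v clause set \<Rightarrow> 'v clause set \<Rightarrow> 'v cnf" where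
  "resolvents A B = {\<alpha> \<union> \<beta> | \<alpha> \<beta>. \<alpha> \<in> A \<and> \<beta> \<in> B}"

definition bva_step :: "'v cnf \<Rightarrow> 'v cnf \<Rightarrow> bool" where
  "bva_step \<Delta> \<Sigma> \<longleftrightarrow>
     (\<exists>Y A B.
        Y \<notin> vars \<Delta> \<and> finite A \<and> finite B \<and>
        (\<forall>\<alpha>\<in>A. finite \<alpha> \<and> clause_vars \<alpha> \<subseteq> vars \<Delta>) \<and>
        (\<forall>\<beta>\<in>B. finite \<beta> \<and> clause_vars \<beta> \<subseteq> vars \<Delta>) \<and>
        (let CY = (\<lambda>\<alpha>. insert (Y, True) \<alpha>) ` A;
             CnY = (\<lambda>\<beta>. insert (Y, False) \<beta>) ` B;
             R = resolvents A B
         in R \<subseteq> \<Delta> \<and> card R > card CY + card CnY \<and>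
            \<Sigma> = (\<Delta> - R) \<union> CY \<union> CnY))"

definition is_tree :: "nat set \<Rightarrow> (nat \<times> nat) set \<Rightarrow> bool" where
  "is_tree V E \<longleftrightarrow> finite V \<and> V \<noteq> {} \<and> E \<subseteq> V \<times> V \<and> sym E \<and> irrefl E \<and>
     (\<forall>u\<in>V. \<forall>v\<in>V. (u, v) \<in> E\<^sup>*) \<and>
     card {{u, v} | u v. (u, v) \<in> E} = card V - 1"

definition tree_path :: "(nat \<times> nat) set \<Rightarrow> nat \<Rightarrow> nat \<Rightarrow> nat list \<Rightarrow> bool" where
  "tree_path E u v p \<longleftrightarrow> p \<noteq> [] \<and> hd p = u \<and> last p = v \<and> distinct p \<and>
     (\<forall>i. Suc i < length p \<longrightarrow> (p ! i, p ! Suc i) \<in> E)"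

definition jointree :: "'v cnf \<Rightarrow> nat set \<Rightarrow> (nat \<times> nat) set \<Rightarrow> (nat \<Rightarrow> 'v set) \<Rightarrow> bool" where
  "jointree \<Delta> V E \<chi> \<longleftrightarrow> is_tree V E \<and>
     (\<forall>t\<in>V. \<chi> t \<subseteq> vars \<Delta>) \<and>
     (\<forall>C\<in>\<Delta>. \<exists>t\<in>V. clause_vars C \<subseteq> \<chi> t) \<and>
     (\<forall>x u v p. u \<in> V \<and> v \<in> V \<and> x \<in> \<chi> u \<and> x \<in> \<chi> v \<and> tree_path E u v p
        \<longrightarrow> (\<forall>t\<in>set p. x \<in> \<chi> t))"

definition jt_width :: "nat set \<Rightarrow> (nat \<Rightarrow> 'v set) \<Rightarrow> nat" where
  "jt_width V \<chi> = Max ((\<lambda>t. card (\<chi> t)) ` V) - 1"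

definition primal_treewidth :: "'v cnf \<Rightarrow> nat" where
  "primal_treewidth \<Delta> = (LEAST w. \<exists>V E \<chi>. jointree \<Delta> V E \<chi> \<and> jt_width V \<chi> = w)"

end

theory Submission
  imports Defs
begin

lemma cv_insert: "clause_vars (insert l C) = insert (fst l) (clause_vars C)"
  by (simp add: clause_vars_def)

lemma cv_un: "clause_vars (a \<union> b) = clause_vars a \<union> clause_vars b"
  by (auto simp add: clause_vars_def)

lemma step:
  assumes c: "cnf \<Delta>" and jt: "jointree \<Delta> V E \<chi>" and b: "bva_step \<Delta> \<Sigma>"
  shows "cnf \<Sigma> \<and> (\<exists>\<chi>'. jointree \<Sigma> V E \<chi>' \<and> jt_width V \<chi>' \<le> jt_width V \<chi> + 1)"
proof -
  obtain Y A B where Y: "Y \<notin> vars \<Delta>" and fA: "finite A" and fB: "finite B"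
    and hA: "\<forall>\<alpha>\<in>A. finite \<alpha> \<and> clause_vars \<alpha> \<subseteq> vars \<Delta>"
    and hB: "\<forall>\<beta>\<in>B. finite \<beta> \<and> clause_vars \<beta> \<subseteq> vars \<Delta>"
    and RD: "resolvents A B \<subseteq> \<Delta>"
    and cardR: "card (resolvents A B) > card ((\<lambda>\<alpha>. insert (Y, True) \<alpha>) ` A) + card ((\<lambda>\<beta>. insert (Y, False) \<beta>) ` B)"
    and S: "\<Sigma> = (\<Delta> - resolvents A B) \<union> (\<lambda>\<alpha>. insert (Y, True) \<alpha>) ` A \<union> (\<lambda>\<beta>. insert (Y, False) \<beta>) ` B"
    using b unfolding bva_step_def Let_def by blast
  have Rne: "resolvents A B \<noteq> {}" using cardR by (metis card.empty not_less0)
  then have Ane: "A \<noteq> {}" and Bne: "B \<noteq> {}" unfolding resolvents_def by auto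
  have fD: "finite \<Delta>" and fC: "\<forall>C\<in>\<Delta>. finite C" using c unfolding cnf_def by auto
  have cS: "cnf \<Sigma>" unfolding S cnf_def using fD fC fA fB hA hB by auto
  have fvD: "finite (vars \<Delta>)" unfolding vars_def clause_vars_def using fD fC by auto
  have vS1: "vars \<Sigma> \<subseteq> insert Y (vars \<Delta>)"
    unfolding S vars_def using hA hB by (auto simp: cv_insert vars_def)
  have vS2: "vars \<Delta> \<subseteq> vars \<Sigma>"
  proof
    fix x assume "x \<in> vars \<Delta>"
    then obtain C where C: "C \<in> \<Delta>" "x \<in> clause_vars C" unfolding vars_def by auto
    show "x \<in> vars \<Sigma>"
    proof (cases "C \<in> resolvents A B")
      case False then show ?thesis using C unfolding S vars_def by auto
    next
      case True
      then obtain \<alpha> \<beta> where ab: "C = \<alpha> \<union> \<beta>" "\<alpha> \<in> A" "\<beta> \<in> B" unfolding resolvents_def by auto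
      have "x \<in> clause_vars (\<alpha> \<union> \<beta>)" using C(2) ab(1) by simp
      then have "x \<in> clause_vars \<alpha> \<or> x \<in> clause_vars \<beta>" by (simp only: cv_un Un_iff)
      then show ?thesis unfolding S vars_def using ab
        by (auto simp: cv_insert)
    qed
  qed
  have vS3: "Y \<in> vars \<Sigma>" using Ane unfolding S vars_def by (auto simp: cv_insert)
  define \<chi>' where "\<chi>' = (\<lambda>t. insert Y (\<chi> t))"
  have tree: "is_tree V E" and bags: "\<forall>t\<in>V. \<chi> t \<subseteq> vars \<Delta>"
    and cov: "\<forall>C\<in>\<Delta>. \<exists>t\<in>V. clause_vars C \<subseteq> \<chi> t"
    and path: "\<forall>x u v p. u \<in> V \<and> v \<in> V \<and> x \<in> \<chi> u \<and> x \<in> \<chi> v \<and> tree_path E u v p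
        \<longrightarrow> (\<forall>t\<in>set p. x \<in> \<chi> t)"
    using jt unfolding jointree_def by blast+
  have jt': "jointree \<Sigma> V E \<chi>'"
    unfolding jointree_def
  proof (intro conjI)
    show "is_tree V E" by fact
    show "\<forall>t\<in>V. \<chi>' t \<subseteq> vars \<Sigma>" using bags vS2 vS3 unfolding \<chi>'_def by auto
    show "\<forall>C\<in>\<Sigma>. \<exists>t\<in>V. clause_vars C \<subseteq> \<chi>' t"
    proof
      fix C assume "C \<in> \<Sigma>"
      then consider "C \<in> \<Delta>" | \<alpha> where "\<alpha> \<in> A" "C = insert (Y, True) \<alpha>"
        | \<beta> where "\<beta> \<in> B" "C = insert (Y, False) \<beta>" unfolding S by auto
      then show "\<exists>t\<in>V. clause_vars C \<subseteq> \<chi>' t"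
      proof cases
        case 1 then show ?thesis using cov unfolding \<chi>'_def by blast
      next
        case (2 \<alpha>)
        obtain \<beta> where "\<beta> \<in> B" using Bne by auto
        then have "\<alpha> \<union> \<beta> \<in> \<Delta>" using RD 2 unfolding resolvents_def by auto
        then obtain t where "t \<in> V" "clause_vars (\<alpha> \<union> \<beta>) \<subseteq> \<chi> t" using cov by blast
        then show ?thesis using 2 unfolding \<chi>'_def by (auto simp: cv_un cv_insert)
      next
        case (3 \<beta>)
        obtain \<alpha> where "\<alpha> \<in> A" using Ane by auto
        then have "\<alpha> \<union> \<beta> \<in> \<Delta>" using RD 3 unfolding resolvents_def by auto
        then obtain t where "t \<in> V" "clause_vars (\<alpha> \<union> \<beta>) \<subseteq> \<chi> t" using cov by blast
        then show ?thesis using 3 unfolding \<chi>'_def by (auto simp: cv_un cv_insert)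
      qed
    qed
    show "\<forall>x u v p. u \<in> V \<and> v \<in> V \<and> x \<in> \<chi>' u \<and> x \<in> \<chi>' v \<and> tree_path E u v p
        \<longrightarrow> (\<forall>t\<in>set p. x \<in> \<chi>' t)"
    proof (intro allI impI ballI)
      fix x u v p t assume h: "u \<in> V \<and> v \<in> V \<and> x \<in> \<chi>' u \<and> x \<in> \<chi>' v \<and> tree_path E u v p" and tp: "t \<in> set p"
      show "x \<in> \<chi>' t"
      proof (cases "x = Y")
        case True then show ?thesis unfolding \<chi>'_def by simp
      next
        case False
        then have "u \<in> V \<and> v \<in> V \<and> x \<in> \<chi> u \<and> x \<in> \<chi> v \<and> tree_path E u v p"
          using h unfolding \<chi>'_def by simp
        then have "x \<in> \<chi> t" using path tp by blast
        then show ?thesis unfolding \<chi>'_def by simp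
      qed
    qed
  qed
  have fV: "finite V" and Vne: "V \<noteq> {}" using tree unfolding is_tree_def by auto
  have cardeq: "\<And>t. t \<in> V \<Longrightarrow> card (\<chi>' t) = Suc (card (\<chi> t))"
  proof -
    fix t assume "t \<in> V"
    then have "\<chi> t \<subseteq> vars \<Delta>" using bags by auto
    then have "finite (\<chi> t)" "Y \<notin> \<chi> t" using fvD Y finite_subset by auto
    then show "card (\<chi>' t) = Suc (card (\<chi> t))" unfolding \<chi>'_def by simp
  qed
  have "(\<lambda>t. card (\<chi>' t)) ` V = Suc ` ((\<lambda>t. card (\<chi> t)) ` V)"
    using cardeq by (auto simp: image_image)
  then have "Max ((\<lambda>t. card (\<chi>' t)) ` V) = Suc (Max ((\<lambda>t. card (\<chi> t)) ` V))"
    using mono_Max_commute[of Suc "(\<lambda>t. card (\<chi> t)) ` V"] fV Vne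
    by (simp add: mono_def)
  then have "jt_width V \<chi>' \<le> jt_width V \<chi> + 1" unfolding jt_width_def by simp
  with cS jt' show ?thesis by blast
qed

lemma iter:
  assumes "cnf \<Delta>" "jointree \<Delta> V E \<chi>" "jt_width V \<chi> \<le> n"
  shows "(bva_step ^^ k) \<Delta> \<Sigma> \<Longrightarrow> cnf \<Sigma> \<and> (\<exists>\<chi>'. jointree \<Sigma> V E \<chi>' \<and> jt_width V \<chi>' \<le> n + k)"
proof (induction k arbitrary: \<Sigma>)
  case 0
  then show ?case using assms by auto
next
  case (Suc k)
  then obtain M where M: "(bva_step ^^ k) \<Delta> M" "bva_step M \<Sigma>" by (auto elim: relpowp_Suc_E)
  from Suc.IH[OF M(1)] obtain \<chi>1 where "cnf M" "jointree M V E \<chi>1" "jt_width V \<chi>1 \<le> n + k" by blast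
  with step[OF this(1,2) M(2)] show ?case by fastforce
qed

lemma jt_exists:
  assumes "cnf \<Delta>"
  shows "\<exists>V E \<chi>. jointree \<Delta> V E \<chi>"
proof -
  have t: "is_tree {0} {}" unfolding is_tree_def by (simp add: sym_def irrefl_def)
  have "jointree \<Delta> {0} {} (\<lambda>_. vars \<Delta>)"
    unfolding jointree_def using t by (auto simp: vars_def)
  then show ?thesis by blast
qed

theorem theorem4:
  fixes \<Delta> \<Sigma> :: "'v cnf" and k w :: nat
  assumes "cnf \<Delta>"
    and "primal_treewidth \<Delta> = w"
    and "(bva_step ^^ k) \<Delta> \<Sigma>"
  shows "primal_treewidth \<Sigma> \<le> w + k"
proof -
  obtain V E \<chi> where j: "jointree \<Delta> V E \<chi>" using jt_exists[OF assms(1)] by blast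
  have "\<exists>V E \<chi>. jointree \<Delta> V E \<chi> \<and> jt_width V \<chi> = w"
    using LeastI_ex[of "\<lambda>w. \<exists>V E \<chi>. jointree \<Delta> V E \<chi> \<and> jt_width V \<chi> = w"] j assms(2)
    unfolding primal_treewidth_def by blast
  then obtain V E \<chi> where "jointree \<Delta> V E \<chi>" "jt_width V \<chi> = w" by blast
  from iter[OF assms(1) this(1), of w k \<Sigma>] this(2) assms(3)
  obtain \<chi>' where "jointree \<Sigma> V E \<chi>'" "jt_width V \<chi>' \<le> w + k" by auto
  have "(LEAST w. \<exists>V E \<chi>. jointree \<Sigma> V E \<chi> \<and> jt_width V \<chi> = w) \<le> jt_width V \<chi>'"
    by (rule Least_le, rule exI[of _ V], rule exI[of _ E], rule exI[of _ \<chi>']) (simp add: \<open>jointree \<Sigma> V E \<chi>'\<close>)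
  then show ?thesis unfolding primal_treewidth_def using \<open>jt_width V \<chi>' \<le> w + k\<close> by linarith
qed

end
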